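(* For any $x\in\mathbb{R}^n$ and $0<\delta<2$, with $z=x-\delta(a_{i^*}^Tx-b_{i^*})^+a_{i^*}$ (where $i^*$ is selected at $x$), $$\mathbb{E}_{\mathbb{S}}[d(z,P)^2]\le\mathbb{E}_{\mathbb{S}}\big[\|x-\mathcal{P}(x)-\delta(a_{i^*}^Tx-b_{i^*})^+a_{i^*}\|^2\big]\le h(\delta)\,d(x,P)^2,$$ where $\eta=2\delta-\delta^2$ and $h(\delta)=1-\eta\mu_1<1$.
   Context: Let $A\in\mathbb{R}^{m\times n}$ have rows $a_1^T,\dots,a_m^T$ with $\|a_i\|_2=1$, and $b\in\mathbb{R}^m$; assume $Ax\le b$ is consistent and let $P=\{x:Ax\le b\}$, $\mathcal{P}(x)$ the Euclidean projection onto $P$, $d(x,P)=\|x-\mathcal{P}(x)\|$, $t^+=\max\{t,0\}$. Fix an integer $1\le\beta\le m$. Sampling distribution $\mathbb{S}$ at $x$: $\tau\subseteq\{1,\dots,m\}$ with $|\tau|=\beta$ uniformly at random, and $i^*\in\tau$ maximizing $(a_i^Tx-b_i)^+$ over $\tau$; $\mathbb{E}_{\mathbb{S}}$ is expectation over $\tau$. $L>0$ is a Hoffman constant ($d(x,P)^2\le L^2\|(Ax-b)^+\|^2$ for all $x$); $\mu_1=\frac1{mL^2}$. *)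

theory Defs
  imports "HOL-Analysis.Analysis"
begin

text \<open>Rows of A are A $ i (i ranges over the finite index type 'm, so m = CARD('m)).\<close>

definition pospart :: "real \<Rightarrow> real" where
  "pospart t = max t 0"

definition polyh :: "real^'n^'m \<Rightarrow> real^'m \<Rightarrow> (real^'n) set" where
  "polyh A b = {x. \<forall>i. (A $ i) \<bullet> x \<le> b $ i}"

definition resid_pos :: "real^'n^'m \<Rightarrow> real^'m \<Rightarrow> real^'n \<Rightarrow> real^'m" where
  "resid_pos A b x = (\<chi> i. pospart ((A $ i) \<bullet> x - b $ i))"

definition samples :: "nat \<Rightarrow> ('m::finite) set set" where
  "samples \<beta> = {\<tau>. card \<tau> = \<beta>}"

definition expS :: "nat \<Rightarrow> (('m::finite) set \<Rightarrow> real) \<Rightarrow> real" where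
  "expS \<beta> f = (\<Sum>\<tau>\<in>samples \<beta>. f \<tau>) / real (card (samples \<beta> :: 'm set set))"

definition greedy_sel :: "real^'n^'m \<Rightarrow> real^'m \<Rightarrow> real^'n \<Rightarrow> nat \<Rightarrow> (('m::finite) set \<Rightarrow> 'm) \<Rightarrow> bool" where
  "greedy_sel A b x \<beta> sel = (\<forall>\<tau>\<in>samples \<beta>. sel \<tau> \<in> \<tau> \<and>
      (\<forall>j\<in>\<tau>. pospart ((A $ j) \<bullet> x - b $ j) \<le> pospart ((A $ sel \<tau>) \<bullet> x - b $ sel \<tau>)))"

end

theory Submission imports Defs begin

lemma card_samples: "card (samples k :: ('m::finite) set set) = CARD('m) choose k"
  using n_subsets[of "UNIV::'m set" k] by (simp add: samples_def)

lemma card_samples_with: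
  fixes i :: "'m::finite"
  assumes "1 \<le> k"
  shows "card {\<tau>\<in>samples k. i \<in> \<tau>} = (CARD('m) - 1) choose (k - 1)"
proof -
  have eq: "{\<tau>\<in>samples k. i \<in> \<tau>} = insert i ` {B. B \<subseteq> UNIV - {i} \<and> card B = k - 1}"
  proof (rule set_eqI, rule iffI)
    fix \<tau> assume "\<tau> \<in> {\<tau>\<in>samples k. i \<in> \<tau>}"
    then have h: "card \<tau> = k" "i \<in> \<tau>" by (auto simp: samples_def)
    then have "\<tau> = insert i (\<tau> - {i})" by auto
    moreover have "card (\<tau> - {i}) = k - 1" using h by simp
    ultimately show "\<tau> \<in> insert i ` {B. B \<subseteq> UNIV - {i} \<and> card B = k - 1}" by blast
  next
    fix \<tau> assume "\<tau> \<in> insert i ` {B. B \<subseteq> UNIV - {i} \<and> card B = k - 1}"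
    then obtain B where B: "B \<subseteq> UNIV - {i}" "card B = k - 1" "\<tau> = insert i B" by auto
    have "i \<notin> B" using B(1) by auto
    then have "card \<tau> = k" using assms B by (simp add: card_insert_if) 
    then show "\<tau> \<in> {\<tau>\<in>samples k. i \<in> \<tau>}" using B by (simp add: samples_def)
  qed
  have inj: "inj_on (insert i) {B. B \<subseteq> UNIV - {i} \<and> card B = k - 1}"
    by (rule inj_onI) blast
  show ?thesis unfolding eq card_image[OF inj]
    using n_subsets[of "UNIV - {i} :: 'm set" "k - 1"] by simp
qed

lemma sum_samples:
  fixes g :: "'m::finite \<Rightarrow> real"
  assumes "1 \<le> k"
  shows "(\<Sum>\<tau>\<in>samples k. \<Sum>i\<in>\<tau>. g i) = real ((CARD('m) - 1) choose (k - 1)) * (\<Sum>i\<in>UNIV. g i)"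
proof -
  have "(\<Sum>\<tau>\<in>samples k. \<Sum>i\<in>\<tau>. g i) = (\<Sum>\<tau>\<in>samples k. \<Sum>i\<in>UNIV. if i \<in> \<tau> then g i else 0)"
    by (simp add: sum.If_cases Int_absorb1)
  also have "\<dots> = (\<Sum>i\<in>UNIV. \<Sum>\<tau>\<in>samples k. if i \<in> \<tau> then g i else 0)"
    by (rule sum.swap)
  also have "\<dots> = (\<Sum>i\<in>UNIV. real (card {\<tau>\<in>samples k. i \<in> \<tau>}) * g i)"
    by (simp add: sum.If_cases samples_def Int_def)
  also have "\<dots> = real ((CARD('m) - 1) choose (k - 1)) * (\<Sum>i\<in>UNIV. g i)"
  proof -
    have "\<And>i::'m. card {\<tau>\<in>samples k. i \<in> \<tau>} = (CARD('m) - 1) choose (k - 1)"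
      using card_samples_with[OF assms] by blast
    then show ?thesis by (simp add: sum_distrib_left)
  qed
  finally show ?thesis .
qed

lemma ratio:
  assumes "1 \<le> k" "k \<le> m"
  shows "real ((m - 1) choose (k - 1)) / real (m choose k) = real k / real m"
proof -
  have "Suc (m-1) * ((m-1) choose (k-1)) = (Suc (m-1) choose Suc (k-1)) * Suc (k-1)"
    by (rule Suc_times_binomial_eq)
  then have "m * ((m-1) choose (k-1)) = (m choose k) * k" using assms by simp
  then have e: "real m * real ((m-1) choose (k-1)) = real (m choose k) * real k"
    by (metis of_nat_mult)
  have "m choose k > 0" using assms by simp
  moreover have "m > 0" using assms by simp
  ultimately show ?thesis using e by (simp add: field_simps)
qed

theorem lemma9:
  fixes A :: "real^'n^('m::finite)" and b :: "real^'m" and L \<delta> :: real and \<beta> :: nat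
    and x :: "real^'n" and sel :: "'m set \<Rightarrow> 'm"
  assumes rows: "\<forall>i. norm (A $ i) = 1"
    and cons: "polyh A b \<noteq> {}"
    and beta: "1 \<le> \<beta>" "\<beta> \<le> CARD('m)"
    and Lpos: "L > 0"
    and hoff: "\<forall>y. (norm (y - closest_point (polyh A b) y))^2 \<le> L^2 * (norm (resid_pos A b y))^2"
    and delta: "0 < \<delta>" "\<delta> < 2"
    and sel: "greedy_sel A b x \<beta> sel"
  shows "let P = polyh A b; \<mu>1 = 1 / (real CARD('m) * L^2); \<eta> = 2*\<delta> - \<delta>^2; h = 1 - \<eta> * \<mu>1;
             r = (\<lambda>\<tau>. pospart ((A $ sel \<tau>) \<bullet> x - b $ sel \<tau>));
             z = (\<lambda>\<tau>. x - (\<delta> * r \<tau>) *\<^sub>R (A $ sel \<tau>))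
         in expS \<beta> (\<lambda>\<tau>. (norm (z \<tau> - closest_point P (z \<tau>)))^2)
              \<le> expS \<beta> (\<lambda>\<tau>. (norm (x - closest_point P x - (\<delta> * r \<tau>) *\<^sub>R (A $ sel \<tau>)))^2)
          \<and> expS \<beta> (\<lambda>\<tau>. (norm (x - closest_point P x - (\<delta> * r \<tau>) *\<^sub>R (A $ sel \<tau>)))^2)
              \<le> h * (norm (x - closest_point P x))^2
          \<and> h < 1"
proof -
  define P where "P = polyh A b"
  define p where "p = closest_point P x"
  define d where "d = norm (x - p)"
  define \<eta> where "\<eta> = 2*\<delta> - \<delta>^2"
  define m where "m = CARD('m)"
  define r where "r = (\<lambda>\<tau>. pospart ((A $ sel \<tau>) \<bullet> x - b $ sel \<tau>))"
  define g where "g = (\<lambda>i. (pospart ((A $ i) \<bullet> x - b $ i))^2)"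
  define S where "S = (samples \<beta> :: 'm set set)"
  define N where "N = real (card S)"
  define G where "G = (\<Sum>i\<in>UNIV. g i)"
  define C where "C = real ((m - 1) choose (\<beta> - 1))"
  have Pclosed: "closed P"
  proof -
    have "P = (\<Inter>i. {y. (A $ i) \<bullet> y \<le> b $ i})" by (auto simp: P_def polyh_def)
    then show ?thesis by (simp add: closed_INT closed_halfspace_le)
  qed
  have Pne: "P \<noteq> {}" using cons P_def by simp
  have pP: "p \<in> P" unfolding p_def by (rule closest_point_in_set[OF Pclosed Pne])
  have eta_pos: "\<eta> > 0" using delta unfolding \<eta>_def by (simp add: power2_eq_square mult_pos_pos)
  have m_pos: "m > 0" unfolding m_def by simp
  have Npos: "N > 0" unfolding N_def S_def card_samples using beta by simp
  have CN: "C / N = real \<beta> / real m"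
    unfolding C_def N_def S_def card_samples m_def using ratio[OF beta] by simp
  have pos_nonneg: "\<And>t. pospart t \<ge> 0" by (simp add: pospart_def)
  have key: "norm (x - p - (\<delta> * r \<tau>) *\<^sub>R (A $ sel \<tau>))^2 \<le> d^2 - \<eta> * (r \<tau>)^2" for \<tau>
  proof -
    define a where "a = A $ sel \<tau>"
    define v where "v = x - p"
    have na: "a \<bullet> a = 1" using rows unfolding a_def by (metis norm_eq_1)
    have exp: "norm (v - (\<delta> * r \<tau>) *\<^sub>R a)^2 = norm v ^2 - 2 * \<delta> * r \<tau> * (a \<bullet> v) + (\<delta> * r \<tau>)^2"
      unfolding power2_norm_eq_inner
      by (simp add: inner_diff_left inner_diff_right na inner_commute power2_eq_square algebra_simps)
    have pa: "a \<bullet> p \<le> b $ sel \<tau>" using pP unfolding P_def polyh_def a_def by auto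
    have rv: "r \<tau> * (a \<bullet> v) \<ge> (r \<tau>)^2"
    proof (cases "a \<bullet> x - b $ sel \<tau> \<ge> 0")
      case True
      then have "r \<tau> = a \<bullet> x - b $ sel \<tau>" by (simp add: r_def a_def pospart_def)
      moreover have "a \<bullet> v \<ge> a \<bullet> x - b $ sel \<tau>" using pa by (simp add: v_def inner_diff_right)
      ultimately show ?thesis using True by (simp add: power2_eq_square mult_left_mono)
    next
      case False
      then have "r \<tau> = 0" by (simp add: r_def a_def pospart_def)
      then show ?thesis by simp
    qed
    have "norm (v - (\<delta> * r \<tau>) *\<^sub>R a)^2 \<le> norm v ^2 - 2 * \<delta> * (r \<tau>)^2 + (\<delta> * r \<tau>)^2"
      using exp rv delta by (smt (verit) mult_left_mono mult.assoc)
    also have "\<dots> = d^2 - \<eta> * (r \<tau>)^2" by (simp add: d_def v_def \<eta>_def power2_eq_square algebra_simps)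
    finally show ?thesis by (simp add: a_def v_def)
  qed
  have first: "norm (z - closest_point P z)^2 \<le> norm (x - p - (\<delta> * r \<tau>) *\<^sub>R (A $ sel \<tau>))^2"
    if "z = x - (\<delta> * r \<tau>) *\<^sub>R (A $ sel \<tau>)" for z \<tau>
  proof -
    have "dist z (closest_point P z) \<le> dist z p" by (rule closest_point_le[OF Pclosed pP])
    moreover have "z - p = x - p - (\<delta> * r \<tau>) *\<^sub>R (A $ sel \<tau>)" using that by simp
    ultimately have "norm (z - closest_point P z) \<le> norm (x - p - (\<delta> * r \<tau>) *\<^sub>R (A $ sel \<tau>))"
      by (simp add: dist_norm)
    then show ?thesis by (simp add: power_mono)
  qed
  have greedy: "(\<Sum>i\<in>\<tau>. g i) \<le> real \<beta> * (r \<tau>)^2" if "\<tau> \<in> S" for \<tau>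
  proof -
    have h: "card \<tau> = \<beta>" "\<forall>j\<in>\<tau>. pospart ((A $ j) \<bullet> x - b $ j) \<le> r \<tau>"
      using that sel by (auto simp: S_def samples_def greedy_sel_def r_def)
    have "(\<Sum>i\<in>\<tau>. g i) \<le> (\<Sum>i\<in>\<tau>. (r \<tau>)^2)"
      using h(2) pos_nonneg unfolding g_def by (intro sum_mono power_mono) auto
    then show ?thesis using h(1) by simp
  qed
  have sumR: "C * G \<le> real \<beta> * (\<Sum>\<tau>\<in>S. (r \<tau>)^2)"
  proof -
    have "C * G = (\<Sum>\<tau>\<in>S. \<Sum>i\<in>\<tau>. g i)"
      unfolding C_def G_def S_def m_def using sum_samples[OF beta(1), of g] by simp
    also have "\<dots> \<le> (\<Sum>\<tau>\<in>S. real \<beta> * (r \<tau>)^2)" by (rule sum_mono) (rule greedy)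
    also have "\<dots> = real \<beta> * (\<Sum>\<tau>\<in>S. (r \<tau>)^2)" by (simp add: sum_distrib_left)
    finally show ?thesis .
  qed
  have GL: "d^2 \<le> L^2 * G"
  proof -
    have "norm (resid_pos A b x)^2 = G"
      unfolding power2_norm_eq_inner inner_vec_def
      by (simp add: resid_pos_def G_def g_def power2_eq_square)
    then show ?thesis using hoff d_def p_def P_def by metis
  qed
  have second: "(\<Sum>\<tau>\<in>S. norm (x - p - (\<delta> * r \<tau>) *\<^sub>R (A $ sel \<tau>))^2) / N
      \<le> (1 - \<eta> * (1 / (real m * L^2))) * d^2"
  proof -
    have "(\<Sum>\<tau>\<in>S. norm (x - p - (\<delta> * r \<tau>) *\<^sub>R (A $ sel \<tau>))^2) \<le> (\<Sum>\<tau>\<in>S. d^2 - \<eta> * (r \<tau>)^2)"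
      by (rule sum_mono) (rule key)
    also have "\<dots> = N * d^2 - \<eta> * (\<Sum>\<tau>\<in>S. (r \<tau>)^2)"
      by (simp add: N_def sum_subtractf sum_distrib_left)
    finally have s1: "(\<Sum>\<tau>\<in>S. norm (x - p - (\<delta> * r \<tau>) *\<^sub>R (A $ sel \<tau>))^2) / N
        \<le> d^2 - \<eta> * ((\<Sum>\<tau>\<in>S. (r \<tau>)^2) / N)"
      using Npos by (simp add: field_simps)
    have "(\<Sum>\<tau>\<in>S. (r \<tau>)^2) / N \<ge> (C / N) * G / real \<beta>"
      using sumR Npos beta by (simp add: field_simps)
    then have "(\<Sum>\<tau>\<in>S. (r \<tau>)^2) / N \<ge> G / real m"
      using CN beta m_pos by (simp add: field_simps)
    moreover have "G / real m \<ge> d^2 / (real m * L^2)"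
      using GL Lpos m_pos by (simp add: field_simps)
    ultimately have "(\<Sum>\<tau>\<in>S. (r \<tau>)^2) / N \<ge> d^2 / (real m * L^2)" by linarith
    then have "d^2 - \<eta> * ((\<Sum>\<tau>\<in>S. (r \<tau>)^2) / N) \<le> d^2 - \<eta> * (d^2 / (real m * L^2))"
      using eta_pos mult_left_mono[of "d^2 / (real m * L^2)" "(\<Sum>\<tau>\<in>S. (r \<tau>)^2) / N" \<eta>] by linarith
    also have "\<dots> = (1 - \<eta> * (1 / (real m * L^2))) * d^2" by (simp add: algebra_simps)
    finally show ?thesis using s1 by linarith
  qed
  have firstE: "(\<Sum>\<tau>\<in>S. norm ((x - (\<delta> * r \<tau>) *\<^sub>R (A $ sel \<tau>)) - closest_point P (x - (\<delta> * r \<tau>) *\<^sub>R (A $ sel \<tau>)))^2) / N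
      \<le> (\<Sum>\<tau>\<in>S. norm (x - p - (\<delta> * r \<tau>) *\<^sub>R (A $ sel \<tau>))^2) / N"
    using Npos by (intro divide_right_mono sum_mono first) auto
  have hlt: "1 - \<eta> * (1 / (real m * L^2)) < 1"
    using eta_pos m_pos Lpos by simp
  show ?thesis
    using firstE second hlt
    unfolding Let_def expS_def
    by (simp add: P_def p_def d_def \<eta>_def m_def r_def S_def N_def)
qed

end
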